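(* If $G$ is a connected graph of maximum degree at most $3$, then $\gamma_e(G)\leq\frac{1}{3}(n(G)+2)$.
   Context: All graphs are finite, simple and undirected; $n(G)=|V(G)|$. For a graph $G$, a set $S\subseteq V(G)$, and vertices $u,v$ with $u\in S$ or $v\in S$, ${\rm dist}_{(G,S)}(u,v)$ is the minimum number of edges of a path $P$ in $G$ between $u$ and $v$ such that $S$ contains exactly one endvertex of $P$ and no internal vertex of $P$, and $\infty$ if no such path exists (so ${\rm dist}_{(G,S)}(u,u)=0$ for $u\in S$). For $u\in V(G)$, $w_{(G,S)}(u)=\sum_{v\in S}(1/2)^{{\rm dist}_{(G,S)}(u,v)-1}$ with $(1/2)^{\infty}=0$. $S$ is an exponential dominating set of $G$ if $w_{(G,S)}(u)\geq 1$ for every $u\in V(G)$, and $\gamma_e(G)$ is the minimum cardinality of an exponential dominating set of $G$. *)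

theory Defs
  imports Complex_Main "HOL-Library.Extended_Nat"
begin

definition simple_graph :: "'a set \<Rightarrow> ('a \<Rightarrow> 'a \<Rightarrow> bool) \<Rightarrow> bool" where
  "simple_graph V E \<longleftrightarrow> finite V \<and> (\<forall>u v. E u v \<longrightarrow> u \<in> V \<and> v \<in> V)
     \<and> (\<forall>u v. E u v \<longrightarrow> E v u) \<and> (\<forall>u. \<not> E u u)"

definition connected_graph :: "'a set \<Rightarrow> ('a \<Rightarrow> 'a \<Rightarrow> bool) \<Rightarrow> bool" where
  "connected_graph V E \<longleftrightarrow> (\<forall>u\<in>V. \<forall>v\<in>V. E\<^sup>*\<^sup>* u v)"

definition degree :: "'a set \<Rightarrow> ('a \<Rightarrow> 'a \<Rightarrow> bool) \<Rightarrow> 'a \<Rightarrow> nat" where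
  "degree V E u = card {v\<in>V. E u v}"

definition is_path :: "'a set \<Rightarrow> ('a \<Rightarrow> 'a \<Rightarrow> bool) \<Rightarrow> 'a list \<Rightarrow> bool" where
  "is_path V E p \<longleftrightarrow> p \<noteq> [] \<and> set p \<subseteq> V \<and> distinct p
     \<and> (\<forall>i. Suc i < length p \<longrightarrow> E (p ! i) (p ! Suc i))"

definition S_path :: "'a set \<Rightarrow> ('a \<Rightarrow> 'a \<Rightarrow> bool) \<Rightarrow> 'a set \<Rightarrow> 'a \<Rightarrow> 'a \<Rightarrow> 'a list \<Rightarrow> bool" where
  "S_path V E S u v p \<longleftrightarrow> is_path V E p \<and> hd p = u \<and> last p = v
     \<and> card (S \<inter> {hd p, last p}) = 1
     \<and> set (butlast (tl p)) \<inter> S = {}"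

definition distS :: "'a set \<Rightarrow> ('a \<Rightarrow> 'a \<Rightarrow> bool) \<Rightarrow> 'a set \<Rightarrow> 'a \<Rightarrow> 'a \<Rightarrow> enat" where
  "distS V E S u v =
     (if \<exists>p. S_path V E S u v p
      then enat (LEAST k. \<exists>p. S_path V E S u v p \<and> length p = Suc k)
      else \<infinity>)"

text \<open>(1/2)^(d-1) with (1/2)^\<infinity> = 0; written as 2 * (1/2)^d to allow d = 0.\<close>
definition exp_weight :: "'a set \<Rightarrow> ('a \<Rightarrow> 'a \<Rightarrow> bool) \<Rightarrow> 'a set \<Rightarrow> 'a \<Rightarrow> real" where
  "exp_weight V E S u =
     (\<Sum>v\<in>S. (case distS V E S u v of enat d \<Rightarrow> 2 * (1/2) ^ d | \<infinity> \<Rightarrow> 0))"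

definition exp_dominating :: "'a set \<Rightarrow> ('a \<Rightarrow> 'a \<Rightarrow> bool) \<Rightarrow> 'a set \<Rightarrow> bool" where
  "exp_dominating V E S \<longleftrightarrow> S \<subseteq> V \<and> (\<forall>u\<in>V. exp_weight V E S u \<ge> 1)"

definition gamma_e :: "'a set \<Rightarrow> ('a \<Rightarrow> 'a \<Rightarrow> bool) \<Rightarrow> nat" where
  "gamma_e V E = (LEAST k. \<exists>S. exp_dominating V E S \<and> card S = k)"

end

theory Submission
  imports Defs
begin

definition tw :: "enat \<Rightarrow> real" where
  "tw d = (case d of enat k \<Rightarrow> 2 * (1/2) ^ k | \<infinity> \<Rightarrow> 0)"

lemma exp_weight_tw: "exp_weight V E S u = (\<Sum>v\<in>S. tw (distS V E S u v))"
  by (simp add: exp_weight_def tw_def)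

lemma tw_nonneg: "tw d \<ge> 0"
  by (cases d) (auto simp: tw_def)

lemma tw_enat: "tw (enat k) = 2 * (1/2) ^ k"
  by (simp add: tw_def)

lemma distS_witness:
  assumes "distS V E S u v = enat k"
  shows "\<exists>p. S_path V E S u v p \<and> length p = Suc k"
proof -
  have ex: "\<exists>p. S_path V E S u v p" using assms by (auto simp: distS_def split: if_splits)
  then have k: "k = (LEAST k. \<exists>p. S_path V E S u v p \<and> length p = Suc k)"
    using assms by (simp add: distS_def)
  from ex obtain p where p: "S_path V E S u v p" by blast
  then have "p \<noteq> []" by (simp add: S_path_def is_path_def)
  then have "\<exists>k. \<exists>p. S_path V E S u v p \<and> length p = Suc k"
    using p by (intro exI[of _ "length p - 1"] exI[of _ p]) auto
  from LeastI_ex[OF this] show ?thesis unfolding k .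
qed

lemma distS_le:
  assumes "S_path V E S u v p"
  shows "distS V E S u v \<le> enat (length p - 1)"
proof -
  have ne: "p \<noteq> []" using assms by (simp add: S_path_def is_path_def)
  have "(LEAST k. \<exists>p. S_path V E S u v p \<and> length p = Suc k) \<le> length p - 1"
    by (rule Least_le) (use assms ne in auto)
  then show ?thesis using assms by (auto simp: distS_def)
qed

lemma tw_path:
  assumes "S_path V E S u v p"
  shows "tw (distS V E S u v) \<ge> 2 * (1/2) ^ (length p - 1)"
proof -
  obtain k where k: "distS V E S u v = enat k" "k \<le> length p - 1"
    using distS_le[OF assms] by (cases "distS V E S u v") auto
  have "(1/2::real) ^ (length p - 1) \<le> (1/2) ^ k"
    by (rule power_decreasing) (use k in auto)
  then show ?thesis using k by (simp add: tw_enat)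
qed

lemma tw_transfer:
  assumes "\<And>p. S_path V2 E S2 u2 v2 p \<Longrightarrow> \<exists>q. S_path V1 E S1 u1 v1 q \<and> length q \<le> length p + j"
  shows "tw (distS V1 E S1 u1 v1) \<ge> (1/2) ^ j * tw (distS V2 E S2 u2 v2)"
proof (cases "distS V2 E S2 u2 v2")
  case (enat k)
  obtain p where p: "S_path V2 E S2 u2 v2 p" "length p = Suc k"
    using distS_witness[OF enat] by blast
  obtain q where q: "S_path V1 E S1 u1 v1 q" "length q \<le> length p + j"
    using assms[OF p(1)] by blast
  have "tw (distS V1 E S1 u1 v1) \<ge> 2 * (1/2) ^ (length q - 1)" by (rule tw_path[OF q(1)])
  moreover have "(1/2::real) ^ (k + j) \<le> (1/2) ^ (length q - 1)"
    by (rule power_decreasing) (use q p in auto)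
  moreover have "(1/2) ^ j * tw (distS V2 E S2 u2 v2) = 2 * (1/2::real) ^ (k + j)"
    using enat by (simp add: tw_enat power_add algebra_simps)
  ultimately show ?thesis by linarith
next
  case infinity
  then show ?thesis using tw_nonneg by (simp add: tw_def)
qed

lemma set_butlast_cons: "set (butlast (x # xs)) \<subseteq> insert x (set (butlast xs))"
  by (cases xs) auto

lemma set_path_split:
  assumes "p \<noteq> []"
  shows "set p \<subseteq> insert (hd p) (insert (last p) (set (butlast (tl p))))"
proof (cases "tl p = []")
  case True
  then show ?thesis using assms by (cases p) auto
next
  case False
  have "set (tl p) \<subseteq> insert (last (tl p)) (set (butlast (tl p)))"
    using append_butlast_last_id[OF False] by (metis Un_insert_right empty_set list.simps(15) set_append subset_refl sup_bot.right_neutral)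
  moreover have "last (tl p) = last p" using False assms by (cases p) auto
  moreover have "set p = insert (hd p) (set (tl p))" using assms by (cases p) auto
  ultimately show ?thesis by auto
qed

lemma path_transfer:
  assumes "S_path V2 E S2 u v p" "set p \<subseteq> V1" "\<forall>x\<in>set p. x \<in> S1 \<longleftrightarrow> x \<in> S2"
  shows "S_path V1 E S1 u v p"
proof -
  have ne: "p \<noteq> []" using assms(1) by (simp add: S_path_def is_path_def)
  have hl: "hd p \<in> set p" "last p \<in> set p" using ne by auto
  have "S1 \<inter> {hd p, last p} = S2 \<inter> {hd p, last p}" using assms(3) hl by auto
  moreover have "set (butlast (tl p)) \<subseteq> set p"
    by (metis in_set_butlastD list.set_sel(2) subsetI tl_Nil)
  ultimately show ?thesis using assms unfolding S_path_def is_path_def by auto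
qed

lemma path_cons:
  assumes "S_path V2 E S2 a s p" "z \<in> V1" "E z a" "set p \<subseteq> V1" "z \<notin> set p"
    "z \<notin> S1" "a \<notin> S1" "\<forall>x\<in>set p. x \<in> S1 \<longleftrightarrow> x \<in> S2"
  shows "S_path V1 E S1 z s (z # p)"
proof -
  have ne: "p \<noteq> []" and hd: "hd p = a" and lst: "last p = s"
    and c: "card (S2 \<inter> {a, s}) = 1" and int: "set (butlast (tl p)) \<inter> S2 = {}"
    and ip: "is_path V2 E p"
    using assms(1) by (auto simp: S_path_def is_path_def)
  have sp: "s \<in> set p" "a \<in> set p" using ne hd lst by auto
  have "a \<notin> S2" using assms(7,8) sp by auto
  then have "s \<in> S2" using c by (cases "s \<in> S2") auto
  then have sS1: "s \<in> S1" using assms(8) sp by auto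
  have zs: "z \<noteq> s" using assms(5) sp by auto
  have card1: "card (S1 \<inter> {z, s}) = 1"
  proof -
    have "S1 \<inter> {z, s} = {s}" using sS1 assms(6) by auto
    then show ?thesis by simp
  qed
  have bl: "set (butlast p) \<subseteq> insert a (set (butlast (tl p)))"
    using set_butlast_cons[of "hd p" "tl p"] ne hd by (cases p) auto
  have "set (butlast p) \<subseteq> set p" by (meson in_set_butlastD subsetI)
  then have int1: "set (butlast (tl (z # p))) \<inter> S1 = {}"
    using bl int assms(7,8) by auto
  have edges: "\<forall>i. Suc i < length (z # p) \<longrightarrow> E ((z # p) ! i) ((z # p) ! Suc i)"
  proof (intro allI impI)
    fix i assume i: "Suc i < length (z # p)"
    show "E ((z # p) ! i) ((z # p) ! Suc i)"
    proof (cases i)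
      case 0
      then show ?thesis using assms(3) hd ne by (simp add: hd_conv_nth)
    next
      case (Suc j)
      then show ?thesis using i ip by (auto simp: is_path_def)
    qed
  qed
  have "is_path V1 E (z # p)"
    using ip assms(2,4,5) edges by (auto simp: is_path_def)
  then show ?thesis using lst ne card1 int1 by (simp add: S_path_def)
qed

lemma path_snoc:
  assumes "S_path V2 E S2 u a p" "n \<in> V1" "E a n" "set p \<subseteq> V1" "n \<notin> set p"
    "n \<in> S1" "u \<notin> S1" "a \<notin> S1" "\<forall>x\<in>set p. x \<noteq> a \<longrightarrow> (x \<in> S1 \<longleftrightarrow> x \<in> S2)" "a \<in> S2"
  shows "S_path V1 E S1 u n (p @ [n])"
proof -
  have ne: "p \<noteq> []" and hd: "hd p = u" and lst: "last p = a"
    and int: "set (butlast (tl p)) \<inter> S2 = {}"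
    and ip: "is_path V2 E p"
    using assms(1) by (auto simp: S_path_def is_path_def)
  have un: "u \<noteq> n" using assms(6,7) by auto
  have card1: "card (S1 \<inter> {u, n}) = 1"
  proof -
    have "S1 \<inter> {u, n} = {n}" using assms(6,7) by auto
    then show ?thesis by simp
  qed
  have tl: "butlast (tl (p @ [n])) = tl p" using ne by (cases p) auto
  have "set (tl p) \<subseteq> insert (last p) (set (butlast (tl p)))"
  proof (cases "tl p = []")
    case True then show ?thesis by simp
  next
    case False
    have "last (tl p) = last p" using False ne by (cases p) auto
    then show ?thesis using append_butlast_last_id[OF False]
      by (metis False Un_insert_right empty_set list.simps(15) set_append subset_refl sup_bot.right_neutral)
  qed
  moreover have "set (butlast (tl p)) \<subseteq> set p"
    by (metis in_set_butlastD list.set_sel(2) subsetI tl_Nil)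
  moreover have "\<forall>x\<in>set (butlast (tl p)). x \<noteq> a" using int assms(10) by auto
  ultimately have int1: "set (butlast (tl (p @ [n]))) \<inter> S1 = {}"
    unfolding tl using int assms(8,9) lst by fastforce
  have edges: "\<forall>i. Suc i < length (p @ [n]) \<longrightarrow> E ((p @ [n]) ! i) ((p @ [n]) ! Suc i)"
  proof (intro allI impI)
    fix i assume i: "Suc i < length (p @ [n])"
    show "E ((p @ [n]) ! i) ((p @ [n]) ! Suc i)"
    proof (cases "Suc i < length p")
      case True
      then show ?thesis using ip by (auto simp: is_path_def nth_append)
    next
      case False
      then have "Suc i = length p" using i by simp
      then have "i = length p - 1" by simp
      then have "p ! i = last p" using ne by (simp add: last_conv_nth)
      then show ?thesis using \<open>Suc i = length p\<close> assms(3) lst by (simp add: nth_append)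
    qed
  qed
  have "is_path V1 E (p @ [n])"
    using ip assms(2,4,5) edges by (auto simp: is_path_def)
  then show ?thesis using hd ne card1 int1 by (simp add: S_path_def)
qed

lemma weight_single:
  assumes "finite S" "v \<in> S" "S_path V E S u v p"
  shows "exp_weight V E S u \<ge> 2 * (1/2) ^ (length p - 1)"
proof -
  have "tw (distS V E S u v) \<le> (\<Sum>v\<in>S. tw (distS V E S u v))"
    by (rule member_le_sum) (use assms tw_nonneg in auto)
  then show ?thesis using tw_path[OF assms(3)] by (simp add: exp_weight_tw)
qed

lemma weight_two:
  assumes "finite S" "v1 \<in> S" "v2 \<in> S" "v1 \<noteq> v2" "S_path V E S u v1 p1" "S_path V E S u v2 p2"
  shows "exp_weight V E S u \<ge> 2 * (1/2) ^ (length p1 - 1) + 2 * (1/2) ^ (length p2 - 1)"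
proof -
  have "(\<Sum>v\<in>{v1,v2}. tw (distS V E S u v)) \<le> (\<Sum>v\<in>S. tw (distS V E S u v))"
    by (rule sum_mono2) (use assms tw_nonneg in auto)
  then show ?thesis using tw_path[OF assms(5)] tw_path[OF assms(6)] assms(4)
    by (simp add: exp_weight_tw)
qed

lemma S_path_self: "u \<in> S \<Longrightarrow> u \<in> V \<Longrightarrow> S_path V E S u u [u]"
  by (simp add: S_path_def is_path_def)

lemma weight_self: "finite S \<Longrightarrow> u \<in> S \<Longrightarrow> u \<in> V \<Longrightarrow> exp_weight V E S u \<ge> 2"
  using weight_single[OF _ _ S_path_self, of S u V E] by simp

lemma S_path_adj:
  assumes "u \<in> V" "s \<in> V" "u \<notin> S" "s \<in> S" "E u s"
  shows "S_path V E S u s [u, s]"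
proof -
  have "u \<noteq> s" using assms by auto
  moreover have "S \<inter> {u, s} = {s}" using assms by auto
  ultimately show ?thesis using assms
    by (auto simp: S_path_def is_path_def less_Suc_eq)
qed

lemma weight_adj:
  assumes "finite S" "u \<in> V" "s \<in> V" "u \<notin> S" "s \<in> S" "E u s"
  shows "exp_weight V E S u \<ge> 1"
proof -
  have "S_path V E S u s [u, s]" by (rule S_path_adj) (use assms in auto)
  from weight_single[OF assms(1,5) this] show ?thesis by simp
qed

lemma S_path_two:
  assumes "u \<in> V" "m \<in> V" "s \<in> V" "u \<notin> S" "m \<notin> S" "s \<in> S" "u \<noteq> m" "E u m" "E m s"
  shows "S_path V E S u s [u, m, s]"
proof -
  have "u \<noteq> s" "m \<noteq> s" using assms by auto
  moreover have "S \<inter> {u, s} = {s}" using assms by auto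
  moreover have "\<forall>i. Suc i < 3 \<longrightarrow> E ([u, m, s] ! i) ([u, m, s] ! Suc i)"
  proof (intro allI impI)
    fix i :: nat assume "Suc i < 3"
    then have "i = 0 \<or> i = 1" by auto
    then show "E ([u, m, s] ! i) ([u, m, s] ! Suc i)" using assms(8,9) by auto
  qed
  ultimately show ?thesis using assms
    by (auto simp: S_path_def is_path_def numeral_3_eq_3)
qed

lemma weight_mono:
  assumes "V2 \<subseteq> V" "S2 \<subseteq> S" "S \<inter> V2 \<subseteq> S2" "finite S" "u \<in> V2"
  shows "exp_weight V E S u \<ge> exp_weight V2 E S2 u"
proof -
  have "(\<Sum>v\<in>S2. tw (distS V2 E S2 u v)) \<le> (\<Sum>v\<in>S2. tw (distS V E S u v))"
  proof (rule sum_mono)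
    fix v assume v: "v \<in> S2"
    have "tw (distS V E S u v) \<ge> (1/2) ^ 0 * tw (distS V2 E S2 u v)"
    proof (rule tw_transfer)
      fix p assume p: "S_path V2 E S2 u v p"
      have "set p \<subseteq> V2" using p by (auto simp: S_path_def is_path_def)
      moreover have "\<forall>x\<in>set p. x \<in> S \<longleftrightarrow> x \<in> S2" using calculation assms(2,3) by auto
      ultimately have "S_path V E S u v p"
        using path_transfer[OF p] assms(1) by blast
      then show "\<exists>q. S_path V E S u v q \<and> length q \<le> length p + 0" by auto
    qed
    then show "tw (distS V2 E S2 u v) \<le> tw (distS V E S u v)" by simp
  qed
  also have "\<dots> \<le> (\<Sum>v\<in>S. tw (distS V E S u v))"
    by (rule sum_mono2) (use assms tw_nonneg in auto)
  finally show ?thesis by (simp add: exp_weight_tw)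
qed

lemma sum_ext:
  assumes "V2 \<subseteq> V" "S2 \<subseteq> S" "S \<inter> V2 \<subseteq> S2" "z \<in> V" "z \<notin> V2" "E z a" "a \<in> V2"
    "a \<notin> S" "z \<notin> S"
  shows "(\<Sum>v\<in>S2. tw (distS V E S z v)) \<ge> (1/2) * exp_weight V2 E S2 a"
proof -
  have "(\<Sum>v\<in>S2. (1/2) * tw (distS V2 E S2 a v)) \<le> (\<Sum>v\<in>S2. tw (distS V E S z v))"
  proof (rule sum_mono)
    fix v assume v: "v \<in> S2"
    have "tw (distS V E S z v) \<ge> (1/2) ^ 1 * tw (distS V2 E S2 a v)"
    proof (rule tw_transfer)
      fix p assume p: "S_path V2 E S2 a v p"
      have sp: "set p \<subseteq> V2" using p by (auto simp: S_path_def is_path_def)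
      have "S_path V E S z v (z # p)"
        by (rule path_cons[OF p]) (use assms sp in auto)
      then show "\<exists>q. S_path V E S z v q \<and> length q \<le> length p + 1" by auto
    qed
    then show "(1/2) * tw (distS V2 E S2 a v) \<le> tw (distS V E S z v)" by simp
  qed
  then show ?thesis by (simp add: exp_weight_tw sum_distrib_left)
qed

lemma weight_swap:
  assumes "V2 \<subseteq> V" "a \<in> S2" "S2 \<subseteq> V2" "finite S2" "n1 \<noteq> n2" "n1 \<in> V" "n2 \<in> V"
    "n1 \<notin> V2" "n2 \<notin> V2" "E a n1" "E a n2" "S = (S2 - {a}) \<union> {n1, n2}" "u \<in> V2" "u \<notin> S2"
  shows "exp_weight V E S u \<ge> exp_weight V2 E S2 u"
proof -
  have uS: "u \<notin> S" using assms by auto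
  have aS: "a \<notin> S" using assms by auto
  have fin: "finite S" using assms by auto
  have eqv: "\<And>x. x \<in> V2 \<Longrightarrow> x \<noteq> a \<Longrightarrow> x \<in> S \<longleftrightarrow> x \<in> S2" using assms by auto
  have part1: "(\<Sum>v\<in>S2 - {a}. tw (distS V2 E S2 u v)) \<le> (\<Sum>v\<in>S2 - {a}. tw (distS V E S u v))"
  proof (rule sum_mono)
    fix v assume v: "v \<in> S2 - {a}"
    have "tw (distS V E S u v) \<ge> (1/2) ^ 0 * tw (distS V2 E S2 u v)"
    proof (rule tw_transfer)
      fix p assume p: "S_path V2 E S2 u v p"
      have sp: "set p \<subseteq> V2" using p by (auto simp: S_path_def is_path_def)
      have ne: "p \<noteq> []" using p by (auto simp: S_path_def is_path_def)
      have "a \<notin> set p"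
      proof
        assume "a \<in> set p"
        then have "a \<in> insert (hd p) (insert (last p) (set (butlast (tl p))))"
          using set_path_split[OF ne] by auto
        then show False using p v assms(2,14) by (auto simp: S_path_def)
      qed
      then have "\<forall>x\<in>set p. x \<in> S \<longleftrightarrow> x \<in> S2" using sp eqv by blast
      then have "S_path V E S u v p"
        using path_transfer[OF p] assms(1) sp by blast
      then show "\<exists>q. S_path V E S u v q \<and> length q \<le> length p + 0" by auto
    qed
    then show "tw (distS V2 E S2 u v) \<le> tw (distS V E S u v)" by simp
  qed
  have part2: "tw (distS V E S u n) \<ge> (1/2) * tw (distS V2 E S2 u a)"
    if n: "n \<in> V" "n \<notin> V2" "E a n" "n \<in> S" for n
  proof -
    have "tw (distS V E S u n) \<ge> (1/2) ^ 1 * tw (distS V2 E S2 u a)"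
    proof (rule tw_transfer)
      fix p assume p: "S_path V2 E S2 u a p"
      have sp: "set p \<subseteq> V2" using p by (auto simp: S_path_def is_path_def)
      have nsp: "n \<notin> set p" using sp n(2) by auto
      have eq2: "\<forall>x\<in>set p. x \<noteq> a \<longrightarrow> (x \<in> S \<longleftrightarrow> x \<in> S2)" using sp eqv by blast
      have "S_path V E S u n (p @ [n])"
        by (rule path_snoc[OF p n(1) n(3) _ nsp n(4) uS aS eq2 assms(2)]) (use sp assms(1) in blast)
      then show "\<exists>q. S_path V E S u n q \<and> length q \<le> length p + 1" by auto
    qed
    then show ?thesis by simp
  qed
  have dec: "exp_weight V E S u = (\<Sum>v\<in>S2 - {a}. tw (distS V E S u v)) + tw (distS V E S u n1) + tw (distS V E S u n2)"
  proof -
    have d: "(S2 - {a}) \<inter> {n1, n2} = {}" using assms by auto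
    have "exp_weight V E S u = (\<Sum>v\<in>S2 - {a}. tw (distS V E S u v)) + (\<Sum>v\<in>{n1,n2}. tw (distS V E S u v))"
      unfolding exp_weight_tw assms(12) by (rule sum.union_disjoint) (use assms d in auto)
    then show ?thesis using assms(5) by simp
  qed
  have dec2: "exp_weight V2 E S2 u = (\<Sum>v\<in>S2 - {a}. tw (distS V2 E S2 u v)) + tw (distS V2 E S2 u a)"
    unfolding exp_weight_tw using assms(2,4) by (simp add: sum.remove add.commute)
  have "tw (distS V E S u n1) \<ge> (1/2) * tw (distS V2 E S2 u a)"
    by (rule part2) (use assms in auto)
  moreover have "tw (distS V E S u n2) \<ge> (1/2) * tw (distS V2 E S2 u a)"
    by (rule part2) (use assms in auto)
  ultimately show ?thesis using dec dec2 part1 by linarith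
qed

definition goal :: "'a set \<Rightarrow> ('a \<Rightarrow> 'a \<Rightarrow> bool) \<Rightarrow> 'a set \<Rightarrow> bool" where
  "goal V E F \<longleftrightarrow> (\<exists>S. F \<subseteq> S \<and> exp_dominating V E S \<and> 3 * card S \<le> card V + 2 + card F)"

lemma dom_by_adj:
  assumes "finite V" "S \<subseteq> V" "\<And>u. u \<in> V \<Longrightarrow> u \<notin> S \<Longrightarrow> \<exists>s\<in>S. E u s"
  shows "exp_dominating V E S"
  unfolding exp_dominating_def
proof (intro conjI ballI)
  show "S \<subseteq> V" by fact
  fix u assume u: "u \<in> V"
  have fin: "finite S" using assms finite_subset by blast
  show "1 \<le> exp_weight V E S u"
  proof (cases "u \<in> S")
    case True then show ?thesis using weight_self[OF fin True u, where E=E] by simp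
  next
    case False
    then obtain s where "s \<in> S" "E u s" using assms(3) u by blast
    then show ?thesis using weight_adj[OF fin u _ False] assms(2) by blast
  qed
qed

lemma red_T1:
  assumes fin: "finite V" and D: "D \<subseteq> V" and IH: "goal (V - D) E (F - D)"
    and SD: "SD \<subseteq> D" "exp_dominating D E SD" "F \<inter> D \<subseteq> SD"
    "3 * card SD \<le> card D + card (F \<inter> D)" and F: "F \<subseteq> V"
  shows "goal V E F"
proof -
  obtain S' where S': "F - D \<subseteq> S'" "exp_dominating (V - D) E S'" "3 * card S' \<le> card (V - D) + 2 + card (F - D)"
    using IH unfolding goal_def by blast
  have S'V: "S' \<subseteq> V - D" using S'(2) by (simp add: exp_dominating_def)
  define S where "S = S' \<union> SD"
  have finS: "finite S" unfolding S_def using S'V SD(1) D fin by (meson finite_Diff finite_UnI finite_subset)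
  have cS: "card S \<le> card S' + card SD" unfolding S_def by (rule card_Un_le)
  have cV: "card V = card (V - D) + card D" using fin D by (metis card_Diff_subset finite_subset le_add_diff_inverse2 card_mono)
  have cF: "card F = card (F - D) + card (F \<inter> D)"
    using F fin by (metis card_Int_Diff add.commute finite_subset)
  have "F \<subseteq> S" unfolding S_def using S'(1) SD(3) by auto
  moreover have "exp_dominating V E S"
    unfolding exp_dominating_def
  proof (intro conjI ballI)
    show "S \<subseteq> V" unfolding S_def using S'V SD(1) D by auto
    fix u assume u: "u \<in> V"
    show "1 \<le> exp_weight V E S u"
    proof (cases "u \<in> D")
      case True
      have "exp_weight V E S u \<ge> exp_weight D E SD u"
        by (rule weight_mono) (use D finS True S'V in \<open>auto simp: S_def\<close>)
      then show ?thesis using SD(2) True by (auto simp: exp_dominating_def)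
    next
      case False
      have "exp_weight V E S u \<ge> exp_weight (V - D) E S' u"
        by (rule weight_mono) (use D finS False u SD(1) in \<open>auto simp: S_def\<close>)
      moreover have "exp_weight (V - D) E S' u \<ge> 1" using S'(2) False u unfolding exp_dominating_def by blast
      ultimately show ?thesis by linarith
    qed
  qed
  moreover have "3 * card S \<le> card V + 2 + card F" using S'(3) SD(4) cS cV cF by linarith
  ultimately show ?thesis unfolding goal_def by blast
qed

lemma red_stub:
  assumes fin: "finite V" and R: "R \<subseteq> V" and v: "v \<in> V" "v \<notin> R"
    and bv: "b \<in> R" "y \<in> R" "b \<noteq> y" "E b v" "E v y" "\<And>x. x \<in> R \<Longrightarrow> x \<noteq> b \<Longrightarrow> x \<noteq> y \<Longrightarrow> E x y"
    and FR: "F \<inter> R \<subseteq> {y}" and cnt: "3 \<le> card R + card (F \<inter> R)" and F: "F \<subseteq> V"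
    and IH: "goal (V - R) E (F - R)"
  shows "goal V E F"
proof -
  obtain S' where S': "F - R \<subseteq> S'" "exp_dominating (V - R) E S'" "3 * card S' \<le> card (V - R) + 2 + card (F - R)"
    using IH unfolding goal_def by blast
  have S'V: "S' \<subseteq> V - R" using S'(2) by (simp add: exp_dominating_def)
  have finS': "finite S'" using S'V fin by (meson finite_Diff finite_subset)
  have yS': "y \<notin> S'" using S'V bv by auto
  define S where "S = insert y S'"
  have finS: "finite S" unfolding S_def using finS' by simp
  have cS: "card S = card S' + 1" unfolding S_def using finS' yS' by simp
  have cV: "card V = card (V - R) + card R" using fin R by (metis card_Diff_subset finite_subset le_add_diff_inverse2 card_mono)
  have cF: "card F = card (F - R) + card (F \<inter> R)"
    using F fin by (metis card_Int_Diff add.commute finite_subset)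
  have SV: "S \<subseteq> V" unfolding S_def using S'V bv R by auto
  have "F \<subseteq> S" unfolding S_def using S'(1) FR by auto
  moreover have "exp_dominating V E S"
    unfolding exp_dominating_def
  proof (intro conjI ballI)
    show "S \<subseteq> V" by fact
    fix u assume u: "u \<in> V"
    show "1 \<le> exp_weight V E S u"
    proof (cases "u \<in> R")
      case False
      have "exp_weight V E S u \<ge> exp_weight (V - R) E S' u"
        by (rule weight_mono) (use R finS False u bv in \<open>auto simp: S_def\<close>)
      moreover have "exp_weight (V - R) E S' u \<ge> 1" using S'(2) False u unfolding exp_dominating_def by blast
      ultimately show ?thesis by linarith
    next
      case True
      have ySV: "y \<in> S" "y \<in> V" using bv R unfolding S_def by auto
      show ?thesis
      proof (cases "u = y")
        case True then show ?thesis using weight_self[OF finS ySV, where E=E] by simp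
      next
        case uy: False
        have uS: "u \<notin> S" using uy True S'V unfolding S_def by auto
        show ?thesis
        proof (cases "u = b")
          case False
          then show ?thesis using weight_adj[OF finS u ySV(2) uS ySV(1)] bv(6)[OF True False uy] by simp
        next
          case ub: True
          show ?thesis
          proof (cases "v \<in> S'")
            case True
            then show ?thesis using weight_adj[OF finS u v(1) uS] ub bv(4) unfolding S_def by simp
          next
            case vS': False
            have vS: "v \<notin> S" using vS' v(2) bv unfolding S_def by auto
            have w1: "exp_weight (V - R) E S' v \<ge> 1" using S'(2) v by (auto simp: exp_dominating_def)
            have e1: "(\<Sum>x\<in>S'. tw (distS V E S b x)) \<ge> (1/2) * exp_weight (V - R) E S' v"
              by (rule sum_ext) (use R S'V bv v vS ub uS in \<open>auto simp: S_def\<close>)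
            have p2: "S_path V E S b y [b, v, y]"
              by (rule S_path_two) (use bv R v vS ub uS ySV in auto)
            have e2: "tw (distS V E S b y) \<ge> 1/2" using tw_path[OF p2] by simp
            have "exp_weight V E S b = tw (distS V E S b y) + (\<Sum>x\<in>S'. tw (distS V E S b x))"
              unfolding exp_weight_tw S_def using finS' yS' by simp
            then show ?thesis using e1 e2 w1 ub by simp
          qed
        qed
      qed
    qed
  qed
  moreover have "3 * card S \<le> card V + 2 + card F" using S'(3) cnt cS cV cF by linarith
  ultimately show ?thesis unfolding goal_def by blast
qed

lemma red_swap:
  assumes fin: "finite V" and R: "R \<subseteq> V" and v: "v \<in> V" "v \<notin> R" "v \<notin> F"
    and c: "c1 \<in> R" "c2 \<in> R" "c1 \<noteq> c2" "E v c1" "E v c2" "E c1 v"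
      "\<And>x. x \<in> R \<Longrightarrow> x \<noteq> c1 \<Longrightarrow> x \<noteq> c2 \<Longrightarrow> E x c1 \<or> E x c2"
    and FR: "F \<inter> R \<subseteq> {c1, c2}" and cnt: "4 \<le> card R + card (F \<inter> R)" and F: "F \<subseteq> V"
    and IH: "goal (V - R) E (insert v (F - R))"
  shows "goal V E F"
proof -
  obtain S' where S': "insert v (F - R) \<subseteq> S'" "exp_dominating (V - R) E S'"
    "3 * card S' \<le> card (V - R) + 2 + card (insert v (F - R))"
    using IH unfolding goal_def by blast
  have S'V: "S' \<subseteq> V - R" using S'(2) by (simp add: exp_dominating_def)
  have finS': "finite S'" using S'V fin by (meson finite_Diff finite_subset)
  have vS': "v \<in> S'" using S'(1) by auto
  define S where "S = (S' - {v}) \<union> {c1, c2}"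
  have finS: "finite S" unfolding S_def using finS' by simp
  have cS: "card S = card S' + 1"
  proof -
    have "(S' - {v}) \<inter> {c1, c2} = {}" using S'V c by auto
    then have "card S = card (S' - {v}) + card {c1, c2}" unfolding S_def
      by (rule card_Un_disjoint[rotated 2]) (use finS' in auto)
    moreover have "card S' > 0" using vS' finS' card_gt_0_iff by blast
    ultimately show ?thesis using c(3) vS' finS' by (simp add: card_Diff_singleton)
  qed
  have cF': "card (insert v (F - R)) = card (F - R) + 1"
    using v F fin by (simp add: finite_subset)
  have cV: "card V = card (V - R) + card R" using fin R by (metis card_Diff_subset finite_subset le_add_diff_inverse2 card_mono)
  have cF: "card F = card (F - R) + card (F \<inter> R)"
    using F fin by (metis card_Int_Diff add.commute finite_subset)
  have SV: "S \<subseteq> V" unfolding S_def using S'V c R by auto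
  have cV2: "c1 \<in> V" "c2 \<in> V" "c1 \<notin> V - R" "c2 \<notin> V - R" using c R by auto
  have "F \<subseteq> S" unfolding S_def using S'(1) FR v(3) by auto
  moreover have "exp_dominating V E S"
    unfolding exp_dominating_def
  proof (intro conjI ballI)
    show "S \<subseteq> V" by fact
    fix u assume u: "u \<in> V"
    show "1 \<le> exp_weight V E S u"
    proof (cases "u \<in> S")
      case True then show ?thesis using weight_self[OF finS True u, where E=E] by simp
    next
      case uS: False
      show ?thesis
      proof (cases "u \<in> R")
        case True
        then have "u \<noteq> c1" "u \<noteq> c2" using uS unfolding S_def by auto
        then have "E u c1 \<or> E u c2" using c(7) True by blast
        then show ?thesis using weight_adj[OF finS u] cV2 uS unfolding S_def by blast
      next
        case uR: False
        show ?thesis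
        proof (cases "u = v")
          case True
          then show ?thesis using weight_adj[OF finS u cV2(1) uS] c(4) unfolding S_def by simp
        next
          case False
          then have uS': "u \<notin> S'" using uS unfolding S_def by auto
          have "exp_weight V E S u \<ge> exp_weight (V - R) E S' u"
            by (rule weight_swap[of "V - R" V v S' c1 c2 E S u]) (use u uR uS' vS' S'V finS' c cV2 in \<open>auto simp: S_def\<close>)
          moreover have "exp_weight (V - R) E S' u \<ge> 1" using S'(2) uR u unfolding exp_dominating_def by blast
          ultimately show ?thesis by linarith
        qed
      qed
    qed
  qed
  moreover have "3 * card S \<le> card V + 2 + card F" using S'(3) cnt cS cV cF cF' by linarith
  ultimately show ?thesis unfolding goal_def by blast
qed

definition ch :: "'a set \<Rightarrow> 'a \<Rightarrow> ('a \<Rightarrow> 'a) \<Rightarrow> 'a \<Rightarrow> 'a set" where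
  "ch V r par u = {w \<in> V. w \<noteq> r \<and> par w = u}"

definition rtree :: "'a set \<Rightarrow> ('a \<Rightarrow> 'a \<Rightarrow> bool) \<Rightarrow> 'a \<Rightarrow> ('a \<Rightarrow> 'a) \<Rightarrow> ('a \<Rightarrow> nat) \<Rightarrow> bool" where
  "rtree V E r par dep \<longleftrightarrow> finite V \<and> r \<in> V \<and> dep r = 0 \<and>
     (\<forall>u\<in>V. u \<noteq> r \<longrightarrow> par u \<in> V \<and> E u (par u) \<and> E (par u) u \<and> dep u = Suc (dep (par u))) \<and>
     card (ch V r par r) \<le> 1 \<and> (\<forall>u\<in>V. card (ch V r par u) \<le> 2)"

definition good :: "'a set \<Rightarrow> 'a \<Rightarrow> ('a \<Rightarrow> 'a) \<Rightarrow> 'a set \<Rightarrow> bool" where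
  "good V r par F \<longleftrightarrow> F \<subseteq> V \<and> (\<forall>u\<in>F. u = r \<or> ch V r par u = {})"

lemma ch_props:
  assumes "rtree V E r par dep" "w \<in> ch V r par u"
  shows "w \<in> V" "w \<noteq> r" "par w = u" "u \<in> V" "E w u" "E u w" "dep w = Suc (dep u)" "w \<noteq> u"
  using assms by (auto simp: rtree_def ch_def)

lemma par_props:
  assumes "rtree V E r par dep" "w \<in> V" "w \<noteq> r"
  shows "par w \<in> V" "w \<in> ch V r par (par w)" "E w (par w)" "E (par w) w" "dep w = Suc (dep (par w))"
  using assms by (auto simp: rtree_def ch_def)

lemma rt_basic:
  assumes "rtree V E r par dep"
  shows "finite V" "r \<in> V" "dep r = 0" "card (ch V r par r) \<le> 1" "\<And>u. u \<in> V \<Longrightarrow> card (ch V r par u) \<le> 2"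
    "\<And>u. finite (ch V r par u)"
  using assms by (auto simp: rtree_def ch_def)

lemma dep0: "rtree V E r par dep \<Longrightarrow> w \<in> V \<Longrightarrow> dep w = 0 \<Longrightarrow> w = r"
  by (auto simp: rtree_def)

lemma restrict:
  assumes "rtree V E r par dep" "R \<subseteq> V" "r \<notin> R" "\<forall>d\<in>R. ch V r par d \<subseteq> R"
  shows "rtree (V - R) E r par dep"
proof -
  have ch: "ch (V - R) r par u = ch V r par u - R" for u by (auto simp: ch_def)
  have fin: "finite (ch V r par u)" for u using rt_basic[OF assms(1)] by blast
  have "\<forall>u\<in>V - R. u \<noteq> r \<longrightarrow> par u \<notin> R"
  proof (intro ballI impI)
    fix u assume u: "u \<in> V - R" "u \<noteq> r"
    show "par u \<notin> R"
    proof
      assume "par u \<in> R"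
      then have "u \<in> R" using assms(4) par_props(2)[OF assms(1)] u by blast
      then show False using u by auto
    qed
  qed
  moreover have "card (ch (V - R) r par u) \<le> card (ch V r par u)" for u
    unfolding ch by (rule card_mono[OF fin]) auto
  moreover have "\<forall>u\<in>V - R. card (ch (V - R) r par u) \<le> 2"
    using calculation(2) rt_basic(5)[OF assms(1)] by (meson DiffD1 order_trans)
  moreover have "card (ch (V - R) r par r) \<le> 1"
    using calculation(2) rt_basic(4)[OF assms(1)] by (meson order_trans)
  ultimately show ?thesis using assms
    by (auto simp: rtree_def)
qed

lemma good_restrict: "good V r par F \<Longrightarrow> good (V - R) r par (F - R)"
  by (auto simp: good_def ch_def)

lemma good_restrict_ins:
  "good V r par F \<Longrightarrow> v \<in> V \<Longrightarrow> v \<notin> R \<Longrightarrow> ch V r par v \<subseteq> R \<Longrightarrow> good (V - R) r par (insert v (F - R))"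
  by (auto simp: good_def ch_def)

lemma card_le2_cases:
  assumes "finite A" "x \<in> A" "card A \<le> 2"
  shows "A = {x} \<or> (\<exists>y. y \<noteq> x \<and> A = {x, y})"
proof -
  have "card (A - {x}) \<le> Suc 0" using assms by (simp add: card_Diff_singleton)
  then have all: "\<forall>a\<in>A - {x}. \<forall>b\<in>A - {x}. a = b"
    using card_le_Suc0_iff_eq[of "A - {x}"] assms(1) by blast
  show ?thesis
  proof (cases "A - {x} = {}")
    case True then show ?thesis using assms(2) by auto
  next
    case False
    then obtain y where y: "y \<in> A - {x}" by blast
    then have "A - {x} = {y}" using all by blast
    then show ?thesis using assms(2) y by blast
  qed
qed

lemma card_le2_cases0:
  assumes "finite A" "card A \<le> 2"
  shows "A = {} \<or> (\<exists>x. A = {x}) \<or> (\<exists>x y. y \<noteq> x \<and> A = {x, y})"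
  using card_le2_cases[OF assms(1) _ assms(2)] by blast

lemma two_leaf:
  assumes rt: "rtree V E r par dep" and gF: "good V r par F" and v: "v \<in> V" "v \<noteq> r"
    and chv: "ch V r par v = {a, a'}" and aa: "a \<noteq> a'"
    and cha: "ch V r par a = {}" and cha': "ch V r par a' = {}"
    and IHR: "\<And>R F'. R \<subseteq> V \<Longrightarrow> R \<noteq> {} \<Longrightarrow> r \<notin> R \<Longrightarrow> (\<forall>d\<in>R. ch V r par d \<subseteq> R)
       \<Longrightarrow> good (V - R) r par F' \<Longrightarrow> goal (V - R) E F'"
  shows "goal V E F"
proof -
  have aC: "a \<in> ch V r par v" "a' \<in> ch V r par v" using chv by auto
  note A = ch_props[OF rt aC(1)] and A' = ch_props[OF rt aC(2)]
  have fin: "finite V" using rt_basic[OF rt] by blast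
  have F: "F \<subseteq> V" using gF by (simp add: good_def)
  have vF: "v \<notin> F" using gF v chv by (auto simp: good_def)
  show ?thesis
  proof (cases "a \<in> F")
    case aF: True
    show ?thesis
    proof (cases "a' \<in> F")
      case a'F: True
      let ?R = "{a, a'}"
      have IH: "goal (V - ?R) E (insert v (F - ?R))"
        by (rule IHR) (use A A' cha cha' chv good_restrict_ins[OF gF v(1)] in auto)
      show ?thesis
        by (rule red_swap[OF fin _ v(1) _ vF _ _ aa _ _ _ _ _ _ F IH]) (use A A' aF a'F aa in auto)
    next
      case a'F: False
      let ?R = "{a, a'}"
      have IH: "goal (V - ?R) E (F - ?R)"
        by (rule IHR) (use A A' cha cha' good_restrict[OF gF] in auto)
      show ?thesis
        by (rule red_stub[OF fin _ v(1) _ _ _ _ _ _ _ _ _ F IH, where b=a' and y=a]) (use A A' aF a'F aa in auto)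
    qed
  next
    case aF: False
    show ?thesis
    proof (cases "a' \<in> F")
      case a'F: True
      let ?R = "{a, a'}"
      have IH: "goal (V - ?R) E (F - ?R)"
        by (rule IHR) (use A A' cha cha' good_restrict[OF gF] in auto)
      show ?thesis
        by (rule red_stub[OF fin _ v(1) _ _ _ _ _ _ _ _ _ F IH, where b=a and y=a']) (use A A' aF a'F aa in auto)
    next
      case a'F: False
      let ?D = "{v, a, a'}"
      have IH: "goal (V - ?D) E (F - ?D)"
        by (rule IHR) (use A A' cha cha' chv v good_restrict[OF gF] in auto)
      have dom: "exp_dominating ?D E {v}"
        by (rule dom_by_adj) (use A A' in auto)
      have c3: "card ?D = 3" using A A' aa by auto
      show ?thesis
        by (rule red_T1[OF fin _ IH _ dom _ _ F]) (use A A' aF a'F vF c3 v in auto)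
    qed
  qed
qed

theorem claim:
  assumes "rtree V E r par dep" "good V r par F"
  shows "goal V E F"
  using assms
proof (induction "card V" arbitrary: V F rule: less_induct)
  case less
  note rt = less.prems(1) and gF = less.prems(2)
  have fin: "finite V" and rV: "r \<in> V" and depr: "dep r = 0" using rt_basic[OF rt] by auto
  have F: "F \<subseteq> V" using gF by (simp add: good_def)
  have IHR: "goal (V - R) E F'" if R: "R \<subseteq> V" "R \<noteq> {}" "r \<notin> R" "\<forall>d\<in>R. ch V r par d \<subseteq> R"
    and gF': "good (V - R) r par F'" for R F'
  proof -
    have "V - R \<subset> V" using R by blast
    then have "card (V - R) < card V" by (rule psubset_card_mono[OF fin])
    moreover have "rtree (V - R) E r par dep" by (rule restrict[OF rt R(1,3,4)])
    ultimately show ?thesis using less.hyps gF' by blast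
  qed
  obtain x where x: "x \<in> V" "dep x = Max (dep ` V)"
    using fin rV by (metis (mono_tags, lifting) Max_in empty_iff finite_imageI image_iff image_is_empty)
  have xmax: "\<And>u. u \<in> V \<Longrightarrow> dep u \<le> dep x" using x fin by simp
  have leafmax: "ch V r par w = {}" if "w \<in> V" "dep w = dep x" for w
  proof (rule ccontr)
    assume "ch V r par w \<noteq> {}"
    then obtain c where c: "c \<in> ch V r par w" by blast
    then have "dep c = Suc (dep w)" "c \<in> V" using ch_props[OF rt c] by auto
    then show False using xmax that by fastforce
  qed
  have notF: "u \<notin> F" if "u \<noteq> r" "ch V r par u \<noteq> {}" for u
    using gF that by (auto simp: good_def)
  show ?case
  proof (cases "x = r")
    case True
    have V1: "V = {r}"
    proof -
      have "u = r" if "u \<in> V" for u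
        using xmax[OF that] True depr dep0[OF rt that] by simp
      then show ?thesis using rV by blast
    qed
    have "exp_dominating V E {r}" by (rule dom_by_adj) (use fin V1 in auto)
    moreover have "F \<subseteq> {r}" using F V1 by simp
    ultimately show ?thesis unfolding goal_def using V1 by (intro exI[of _ "{r}"]) auto
  next
    case xr: False
    define p where "p = par x"
    note P = par_props[OF rt x(1) xr, folded p_def]
    have chp_leaf: "\<And>w. w \<in> ch V r par p \<Longrightarrow> ch V r par w = {}"
      using leafmax ch_props[OF rt] P(5) by metis
    show ?thesis
    proof (cases "p = r")
      case True
      have chr: "ch V r par r = {x}"
        using card_le2_cases[OF rt_basic(6)[OF rt] P(2)] rt_basic(4)[OF rt] True by fastforce
      have V2: "V = {r, x}"
      proof -
        have "u \<in> {r, x}" if u: "u \<in> V" for u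
        proof (cases "u = r")
          case False
          note U = par_props[OF rt u False]
          have "dep u \<le> Suc 0" using xmax[OF u] P(5) True depr by simp
          then have "dep (par u) = 0" using U(5) by simp
          then have "par u = r" using dep0[OF rt U(1)] by simp
          then show ?thesis using U(2) chr by auto
        qed simp
        then show ?thesis using rV x(1) by blast
      qed
      have rx: "r \<noteq> x" using xr by simp
      show ?thesis
      proof (cases "F = {}")
        case True
        have "exp_dominating V E {r}" by (rule dom_by_adj) (use fin V2 P True in auto)
        then show ?thesis unfolding goal_def using V2 True rx by (intro exI[of _ "{r}"]) auto
      next
        case Fne: False
        have "exp_dominating V E F"
        proof (rule dom_by_adj[OF fin F])
          fix u assume "u \<in> V" "u \<notin> F"
          then show "\<exists>s\<in>F. E u s" using V2 F Fne P True by (cases "u = r") auto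
        qed
        moreover have "card F \<le> 2" using card_mono[OF fin F] V2 rx by simp
        ultimately show ?thesis unfolding goal_def using V2 rx by (intro exI[of _ F]) auto
      qed
    next
      case pr: False
      have pF: "p \<notin> F" using notF[OF pr] P(2) by blast
      consider "ch V r par p = {x}" | x' where "x' \<noteq> x" "ch V r par p = {x, x'}"
        using card_le2_cases[OF rt_basic(6)[OF rt] P(2) rt_basic(5)[OF rt P(1)]] by blast
      then show ?thesis
      proof cases
        case 2
        show ?thesis
          by (rule two_leaf[OF rt gF P(1) pr 2(2) 2(1)[symmetric]]) (use chp_leaf 2 IHR in auto)
      next
        case chp: 1
        show ?thesis
        proof (cases "x \<in> F")
          case xF: True
          let ?D = "{p, x}"
          have IH: "goal (V - ?D) E (F - ?D)"
            by (rule IHR) (use x(1) P chp chp_leaf pr xr good_restrict[OF gF] in auto)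
          have dom: "exp_dominating ?D E {x}" by (rule dom_by_adj) (use x(1) P in auto)
          have px: "p \<noteq> x" using P(5) by auto
          have c2: "card ?D = 2" "F \<inter> ?D = {x}" using P pF xF px by auto
          show ?thesis
            by (rule red_T1[OF fin _ IH _ dom _ _ F]) (use x(1) P c2 in auto)
        next
          case xF: False
          define g where "g = par p"
          note G = par_props[OF rt P(1) pr, folded g_def]
          show ?thesis
          proof (cases "g = r")
            case True
            have chr: "ch V r par r = {p}"
              using card_le2_cases[OF rt_basic(6)[OF rt] G(2)] rt_basic(4)[OF rt] True by fastforce
            have dp: "dep p = 1" "dep x = 2" using G(5) P(5) True depr by auto
            have V3: "V = {r, p, x}"
            proof -
              have "u \<in> {r, p, x}" if u: "u \<in> V" for u
              proof (cases "u = r")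
                case False
                note U = par_props[OF rt u False]
                have "dep u \<le> 2" using xmax[OF u] dp by simp
                show ?thesis
                proof (cases "par u = r")
                  case True
                  then show ?thesis using U(2) chr by auto
                next
                  case pu: False
                  note U2 = par_props[OF rt U(1) pu]
                  have "dep (par (par u)) = 0" using U(5) U2(5) \<open>dep u \<le> 2\<close> dep0[OF rt U(1)] pu by simp
                  then have "par (par u) = r" using dep0[OF rt U2(1)] by simp
                  then have "par u = p" using U2(2) chr by auto
                  then show ?thesis using U(2) chp by auto
                qed
              qed simp
              then show ?thesis using rV x(1) P(1) by blast
            qed
            have dist: "r \<noteq> p" "r \<noteq> x" "p \<noteq> x" using pr xr ch_props[OF rt P(2)] by auto
            have Fs: "F \<subseteq> {r, x}" using F V3 pF by auto
            show ?thesis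
            proof (cases "F = {r, x}")
              case True
              have "exp_dominating V E F"
              proof (rule dom_by_adj[OF fin F])
                fix u assume "u \<in> V" "u \<notin> F"
                then show "\<exists>s\<in>F. E u s" using V3 True G \<open>g = r\<close> by auto
              qed
              then show ?thesis unfolding goal_def using V3 True dist by (intro exI[of _ F]) auto
            next
              case False
              have cF: "card F \<le> 1"
              proof -
                have "F \<subset> {r, x}" using Fs False by blast
                then have "card F < card {r, x}" using psubset_card_mono[of "{r, x}" F] by simp
                then show ?thesis using dist by simp
              qed
              have finF: "finite F" using Fs finite_subset by blast
              have "exp_dominating V E (insert p F)"
              proof (rule dom_by_adj[OF fin])
                show "insert p F \<subseteq> V" using F P by auto
                fix u assume "u \<in> V" "u \<notin> insert p F"
                then show "\<exists>s\<in>insert p F. E u s" using V3 G P \<open>g = r\<close> by auto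
              qed
              moreover have "card (insert p F) = card F + 1" using finF pF by simp
              ultimately show ?thesis unfolding goal_def using V3 cF dist by (intro exI[of _ "insert p F"]) auto
            qed
          next
            case gr: False
            have gF': "g \<notin> F" using notF[OF gr] G(2) by blast
            have dg: "dep p = Suc (dep g)" "dep x = Suc (Suc (dep g))" using G(5) P(5) by auto
            consider "ch V r par g = {p}" | y where "y \<noteq> p" "ch V r par g = {p, y}"
              using card_le2_cases[OF rt_basic(6)[OF rt] G(2) rt_basic(5)[OF rt G(1)]] by blast
            then show ?thesis
            proof cases
              case chg: 1
              let ?D = "{g, p, x}"
              have dist: "g \<noteq> p" "g \<noteq> x" "p \<noteq> x" using dg by auto
              have IH: "goal (V - ?D) E (F - ?D)"
                by (rule IHR) (use x(1) P G chp chg chp_leaf pr xr gr good_restrict[OF gF] in auto)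
              have dom: "exp_dominating ?D E {p}" by (rule dom_by_adj) (use x(1) P G in auto)
              have c3: "card ?D = 3" "F \<inter> ?D = {}" using dist pF xF gF' by auto
              show ?thesis
                by (rule red_T1[OF fin _ IH _ dom _ _ F]) (use x(1) P G c3 in auto)
            next
              case 2
              note chg = 2(2) and yp = 2(1)
              have yC: "y \<in> ch V r par g" using chg by auto
              note Y = ch_props[OF rt yC]
              have dy: "dep y = Suc (dep g)" using Y by simp
              have chy_leaf: "\<And>w. w \<in> ch V r par y \<Longrightarrow> ch V r par w = {}"
                using leafmax ch_props[OF rt] dy dg by metis
              have dist: "g \<noteq> p" "g \<noteq> x" "p \<noteq> x" "g \<noteq> y" "x \<noteq> y" using dg dy by auto
              consider "ch V r par y = {}" | z where "ch V r par y = {z}" | z z' where "z' \<noteq> z" "ch V r par y = {z, z'}"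
                using card_le2_cases0[OF rt_basic(6)[OF rt] rt_basic(5)[OF rt Y(1)]] by blast
              then show ?thesis
              proof cases
                case chy: 1
                show ?thesis
                proof (cases "y \<in> F")
                  case yF: True
                  let ?R = "{p, x, y}"
                  have IH: "goal (V - ?R) E (insert g (F - ?R))"
                    by (rule IHR) (use x(1) P G Y chp chg chy chp_leaf pr xr gr dist good_restrict_ins[OF gF G(1)] in auto)
                  have cR: "card ?R = 3" "F \<inter> ?R = {y}" using dist yp yF xF pF by auto
                  show ?thesis
                    by (rule red_swap[OF fin _ G(1) _ gF' _ _ yp[symmetric] _ _ _ _ _ _ F IH]) (use x(1) P G Y cR dist in auto)
                next
                  case yF: False
                  let ?R = "{y, p, x}"
                  have IH: "goal (V - ?R) E (F - ?R)"
                    by (rule IHR) (use x(1) P G Y chp chg chy chp_leaf pr xr gr dist good_restrict[OF gF] in auto)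
                  have cR: "card ?R = 3" using dist yp by auto
                  show ?thesis
                    by (rule red_stub[OF fin _ G(1) _ _ _ _ _ _ _ _ _ F IH, where b=y and y=p])
                      (use x(1) P G Y cR dist yp yF xF pF in auto)
                qed
              next
                case chy: (2 z)
                have zC: "z \<in> ch V r par y" using chy by auto
                note Z = ch_props[OF rt zC]
                have chz: "ch V r par z = {}" using chy_leaf zC by blast
                have yF: "y \<notin> F" using notF[OF Y(2)] chy by blast
                show ?thesis
                proof (cases "z \<in> F")
                  case zF: True
                  let ?D = "{y, z}"
                  have IH: "goal (V - ?D) E (F - ?D)"
                    by (rule IHR) (use Y Z chy chz good_restrict[OF gF] in auto)
                  have dom: "exp_dominating ?D E {z}" by (rule dom_by_adj) (use Y Z in auto)
                  have c2: "card ?D = 2" "F \<inter> ?D = {z}" using Z yF zF by auto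
                  show ?thesis
                    by (rule red_T1[OF fin _ IH _ dom _ _ F]) (use Y Z c2 in auto)
                next
                  case zF: False
                  let ?R = "{p, x, y, z}"
                  have xz: "x \<noteq> z" using P Z yp by (metis ch_props(3)[OF rt P(2)] p_def)
                  have dist2: "z \<noteq> p" "z \<noteq> y" "z \<noteq> g" using Z dy dg by auto
                  have IH: "goal (V - ?R) E (insert g (F - ?R))"
                    by (rule IHR) (use x(1) P G Y Z chp chg chy chz chp_leaf pr xr gr dist dist2 good_restrict_ins[OF gF G(1)] in auto)
                  have cR: "card ?R = 4" "F \<inter> ?R = {}" using dist dist2 xz yp yF xF pF zF by auto
                  show ?thesis
                    by (rule red_swap[OF fin _ G(1) _ gF' _ _ yp[symmetric] _ _ _ _ _ _ F IH]) (use x(1) P G Y Z cR dist dist2 in auto)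
                qed
              next
                case chy: (3 z z')
                show ?thesis
                  by (rule two_leaf[OF rt gF Y(1) Y(2) chy(2) chy(1)[symmetric]]) (use chy_leaf chy IHR in auto)
              qed
            qed
          qed
        qed
      qed
    qed
  qed
qed

lemma bfs:
  fixes E :: "'a \<Rightarrow> 'a \<Rightarrow> bool"
  assumes W: "y0 \<in> W" and conn: "\<forall>u\<in>W. (\<lambda>a b. E a b \<and> a \<in> W \<and> b \<in> W)\<^sup>*\<^sup>* y0 u"
  shows "\<exists>par dep. dep y0 = (0::nat) \<and> (\<forall>u\<in>W. u \<noteq> y0 \<longrightarrow> par u \<in> W \<and> E (par u) u \<and> dep u = Suc (dep (par u)))"
proof -
  define EW where "EW = (\<lambda>a b. E a b \<and> a \<in> W \<and> b \<in> W)"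
  define dep where "dep u = (LEAST k. (EW ^^ k) y0 u)" for u
  have ex: "\<exists>k. (EW ^^ k) y0 u" if "u \<in> W" for u
    using conn that unfolding EW_def by (simp add: rtranclp_power)
  have depI: "(EW ^^ dep u) y0 u" if "u \<in> W" for u
    unfolding dep_def using ex[OF that] by (rule LeastI_ex)
  have depL: "dep u \<le> k" if "(EW ^^ k) y0 u" for u k
    unfolding dep_def using that by (rule Least_le)
  have d0: "dep y0 = 0" using depL[of 0 y0] by simp
  have step: "\<exists>w. w \<in> W \<and> E w u \<and> dep u = Suc (dep w)" if u: "u \<in> W" "u \<noteq> y0" for u
  proof -
    obtain k where k: "dep u = k" by blast
    have "k \<noteq> 0"
    proof
      assume "k = 0"
      then have "(EW ^^ 0) y0 u" using depI[OF u(1)] k by simp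
      then show False using u(2) by (auto elim: relpowp_0_E)
    qed
    then obtain j where j: "k = Suc j" by (cases k) auto
    from depI[OF u(1)] obtain w where w: "(EW ^^ j) y0 w" "EW w u"
      unfolding k j by (auto elim: relpowp_Suc_E)
    have wW: "w \<in> W" "E w u" using w(2) unfolding EW_def by auto
    have "dep w \<le> j" using depL[OF w(1)] .
    moreover have "\<not> dep w < j"
    proof
      assume "dep w < j"
      have "(EW ^^ Suc (dep w)) y0 u" using depI[OF wW(1)] w(2) by (rule relpowp_Suc_I)
      then have "dep u \<le> Suc (dep w)" by (rule depL)
      then show False using \<open>dep w < j\<close> k j by simp
    qed
    ultimately show ?thesis using wW k j by (intro exI[of _ w]) auto
  qed
  define par where "par u = (SOME w. w \<in> W \<and> E w u \<and> dep u = Suc (dep w))" for u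
  have pp: "par u \<in> W \<and> E (par u) u \<and> dep u = Suc (dep (par u))" if "u \<in> W" "u \<noteq> y0" for u
    unfolding par_def by (rule someI_ex[OF step[OF that]])
  have "\<forall>u\<in>W. u \<noteq> y0 \<longrightarrow> par u \<in> W \<and> E (par u) u \<and> dep u = Suc (dep (par u))"
    using pp by blast
  then show ?thesis using d0 by blast
qed

lemma spanning:
  assumes sg: "simple_graph V E" and conn: "connected_graph V E" and deg: "\<forall>u\<in>V. degree V E u \<le> 3"
    and c2: "card V \<ge> 2"
  shows "\<exists>r par dep. rtree V E r par dep"
proof -
  have fin: "finite V" and inV: "\<And>a b. E a b \<Longrightarrow> a \<in> V \<and> b \<in> V" and sym: "\<And>a b. E a b \<Longrightarrow> E b a"
    using sg by (auto simp: simple_graph_def)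
  obtain r0 where r0: "r0 \<in> V" using c2 by fastforce
  define EV where "EV = (\<lambda>a b. E a b \<and> a \<in> V \<and> b \<in> V)"
  have "E \<le> EV" unfolding EV_def using inV by auto
  then have mono: "E\<^sup>*\<^sup>* \<le> EV\<^sup>*\<^sup>*" by (rule rtranclp_mono)
  have "\<forall>u\<in>V. EV\<^sup>*\<^sup>* r0 u"
  proof
    fix u assume "u \<in> V"
    then have "E\<^sup>*\<^sup>* r0 u" using conn r0 by (simp add: connected_graph_def)
    then show "EV\<^sup>*\<^sup>* r0 u" using predicate2D[OF mono] by blast
  qed
  from bfs[of r0 V E, OF r0 this[unfolded EV_def]] obtain par0 and dep0 :: "'a \<Rightarrow> nat" where
    b0: "dep0 r0 = 0" "\<forall>u\<in>V. u \<noteq> r0 \<longrightarrow> par0 u \<in> V \<and> E (par0 u) u \<and> dep0 u = Suc (dep0 (par0 u))"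
    by blast
  obtain x where x: "x \<in> V" "dep0 x = Max (dep0 ` V)"
    using fin r0 by (metis (mono_tags, lifting) Max_in empty_iff finite_imageI image_iff image_is_empty)
  have xmax: "\<And>u. u \<in> V \<Longrightarrow> dep0 u \<le> dep0 x" using x fin by simp
  obtain u1 where u1: "u1 \<in> V" "u1 \<noteq> r0"
  proof -
    have "\<not> V \<subseteq> {r0}"
    proof
      assume "V \<subseteq> {r0}"
      then have "card V \<le> card {r0}" by (rule card_mono[rotated]) simp
      then show False using c2 by simp
    qed
    then show ?thesis using that by blast
  qed
  have xr0: "x \<noteq> r0"
  proof
    assume "x = r0"
    moreover have "dep0 u1 = Suc (dep0 (par0 u1))" using b0(2) u1 by blast
    ultimately show False using xmax[OF u1(1)] b0(1) by simp
  qed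
  have nopar: "par0 u \<noteq> x" if "u \<in> V" "u \<noteq> r0" for u
  proof
    assume "par0 u = x"
    moreover have "dep0 u = Suc (dep0 (par0 u))" using b0(2) that by blast
    ultimately show False using xmax[OF that(1)] by simp
  qed
  define W where "W = V - {x}"
  define y0 where "y0 = par0 x"
  have y0a: "par0 x \<in> V" "E (par0 x) x" "dep0 x = Suc (dep0 (par0 x))" using b0(2) x(1) xr0 by auto
  have y0: "y0 \<in> W" "E y0 x" "E x y0" using y0a sym[OF y0a(2)] unfolding W_def y0_def by auto
  define EW where "EW = (\<lambda>a b. E a b \<and> a \<in> W \<and> b \<in> W)"
  have toroot: "\<forall>u\<in>W. dep0 u = n \<longrightarrow> EW\<^sup>*\<^sup>* u r0" for n
  proof (induction n)
    case 0
    then show ?case using b0 by (auto simp: W_def)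
  next
    case (Suc n)
    show ?case
    proof (intro ballI impI)
      fix u assume u: "u \<in> W" "dep0 u = Suc n"
      have ur: "u \<noteq> r0" using u b0 by auto
      have pu: "par0 u \<in> W" "E u (par0 u)" "dep0 (par0 u) = n"
      proof -
        have uV: "u \<in> V" using u unfolding W_def by auto
        have h: "par0 u \<in> V" "E (par0 u) u" "dep0 u = Suc (dep0 (par0 u))" using b0(2) uV ur by auto
        show "par0 u \<in> W" "E u (par0 u)" "dep0 (par0 u) = n"
          using h sym[OF h(2)] nopar[OF uV ur] u(2) unfolding W_def by auto
      qed
      have "EW u (par0 u)" using pu u unfolding EW_def by auto
      moreover have "EW\<^sup>*\<^sup>* (par0 u) r0" using Suc.IH pu by blast
      ultimately show "EW\<^sup>*\<^sup>* u r0" by (rule converse_rtranclp_into_rtranclp)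
    qed
  qed
  have symEW: "EW\<inverse>\<inverse> = EW" unfolding EW_def using sym by (auto intro!: ext)
  have connW: "\<forall>u\<in>W. EW\<^sup>*\<^sup>* y0 u"
  proof
    fix u assume u: "u \<in> W"
    have "EW\<^sup>*\<^sup>* y0 r0" using toroot y0(1) by blast
    moreover have "(EW\<inverse>\<inverse>)\<^sup>*\<^sup>* r0 u" using toroot u by (blast intro: rtranclp_converseI)
    ultimately show "EW\<^sup>*\<^sup>* y0 u" using symEW by simp
  qed
  from bfs[of y0 W E, OF y0(1) connW[unfolded EW_def]] obtain par1 and dep1 :: "'a \<Rightarrow> nat" where
    b1: "dep1 y0 = 0" "\<forall>u\<in>W. u \<noteq> y0 \<longrightarrow> par1 u \<in> W \<and> E (par1 u) u \<and> dep1 u = Suc (dep1 (par1 u))"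
    by blast
  define par where "par u = (if u = y0 then x else par1 u)" for u
  define dep where "dep u = (if u = x then 0 else Suc (dep1 u))" for u
  have P: "par u \<in> V \<and> E u (par u) \<and> E (par u) u \<and> dep u = Suc (dep (par u))" if u: "u \<in> V" "u \<noteq> x" for u
  proof (cases "u = y0")
    case True
    have "y0 \<noteq> x" using y0(1) unfolding W_def by auto
    then show ?thesis using True y0 x b1 unfolding par_def dep_def W_def by auto
  next
    case False
    have uW: "u \<in> W" using u unfolding W_def by auto
    have "par1 u \<in> W" "E (par1 u) u" "dep1 u = Suc (dep1 (par1 u))" using b1 uW False by auto
    then show ?thesis using False u sym[OF \<open>E (par1 u) u\<close>] unfolding par_def dep_def W_def by auto
  qed
  have chx: "ch V x par x \<subseteq> {y0}"
  proof
    fix w assume "w \<in> ch V x par x"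
    then have w: "w \<in> V" "w \<noteq> x" "par w = x" by (auto simp: ch_def)
    show "w \<in> {y0}"
    proof (rule ccontr)
      assume "w \<notin> {y0}"
      then have "par1 w \<in> W" using b1 w unfolding W_def by auto
      then show False using w \<open>w \<notin> {y0}\<close> unfolding par_def W_def by auto
    qed
  qed
  have c1: "card (ch V x par x) \<le> 1" using card_mono[OF _ chx] by simp
  have c2': "card (ch V x par u) \<le> 2" if u: "u \<in> V" for u
  proof (cases "u = x")
    case True then show ?thesis using c1 by simp
  next
    case False
    note Pu = P[OF u False]
    have sub: "insert (par u) (ch V x par u) \<subseteq> {w \<in> V. E u w}"
    proof
      fix w assume "w \<in> insert (par u) (ch V x par u)"
      then show "w \<in> {w \<in> V. E u w}"
      proof
        assume "w = par u" then show ?thesis using Pu by auto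
      next
        assume "w \<in> ch V x par u"
        then have "w \<in> V" "w \<noteq> x" "par w = u" by (auto simp: ch_def)
        then show ?thesis using P by fastforce
      qed
    qed
    have notin: "par u \<notin> ch V x par u"
    proof
      assume "par u \<in> ch V x par u"
      then have "par (par u) = u" "par u \<in> V" "par u \<noteq> x" by (auto simp: ch_def)
      then show False using P[of "par u"] Pu by simp
    qed
    have finc: "finite (ch V x par u)" using fin by (simp add: ch_def)
    have "card (insert (par u) (ch V x par u)) \<le> card {w \<in> V. E u w}"
      by (rule card_mono) (use fin sub in auto)
    moreover have "card {w \<in> V. E u w} \<le> 3" using deg u unfolding degree_def by blast
    ultimately have "card (ch V x par u) + 1 \<le> 3" using notin finc by simp
    then show ?thesis by simp
  qed
  have "rtree V E x par dep"
    unfolding rtree_def using fin x(1) P c1 c2' by (auto simp: dep_def)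
  then show ?thesis by blast
qed

theorem theorem3:
  fixes V :: "'a set" and E :: "'a \<Rightarrow> 'a \<Rightarrow> bool"
  assumes "simple_graph V E"
    and "connected_graph V E"
    and "\<forall>u\<in>V. degree V E u \<le> 3"
  shows "real (gamma_e V E) \<le> (real (card V) + 2) / 3"
proof -
  have fin: "finite V" using assms(1) by (simp add: simple_graph_def)
  have "\<exists>S. exp_dominating V E S \<and> 3 * card S \<le> card V + 2"
  proof (cases "card V \<ge> 2")
    case True
    then obtain r par dep where rt: "rtree V E r par dep" using spanning assms by blast
    have "good V r par {}" by (simp add: good_def)
    from claim[OF rt this] show ?thesis unfolding goal_def by auto
  next
    case False
    have "exp_dominating V E V" by (rule dom_by_adj) (use fin in auto)
    then show ?thesis using False by (intro exI[of _ V]) auto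
  qed
  then obtain S where S: "exp_dominating V E S" "3 * card S \<le> card V + 2" by blast
  have "gamma_e V E \<le> card S" unfolding gamma_e_def by (rule Least_le) (use S in blast)
  then have "3 * gamma_e V E \<le> card V + 2" using S by linarith
  then have "3 * real (gamma_e V E) \<le> real (card V) + 2" by linarith
  then show ?thesis by simp
qed

end
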